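(* For a finite set $\Gamma=\{\gamma_1,\dots,\gamma_n\}$ of tape symbols, the tape theory over $\Gamma$ is not finitely axiomatizable: there is no finite set of equations in the tape signature whose deductive closure under equational logic equals the tape theory.
   Context: For $i\in\mathbb Z$, $k\ge 0$ and $\sigma,\sigma':\mathbb Z\to\Gamma$ write $\sigma=_{i\pm k}\sigma'$ if $\sigma(j)=\sigma'(j)$ for all $j$ with $|i-j|\le k$, and $\sigma=^{i\pm k}\sigma'$ if $\sigma(j)=\sigma'(j)$ for all $j$ with $|i-j|>k$; write $\sigma_{+j}=\sigma\circ(\lambda i.\,i+j)$. The tape monad over $\Gamma$ assigns to a set $X$ the set $TX$ of maps $\langle r,z,t\rangle:\mathbb Z\times\Gamma^{\mathbb Z}\to X\times\mathbb Z\times\Gamma^{\mathbb Z}$ for which there is $k\ge0$ such that for all $i,j\in\mathbb Z$ and all $\sigma,\sigma'$ with $\sigma=_{i\pm k}\sigma'$: $t(i,\sigma)=_{i\pm k}t(i,\sigma')$, $r(i,\sigma)=r(i,\sigma')$, $|z(i,\sigma)-i|\le k$, $t(i,\sigma)=^{i\pm k}\sigma$, $z(i,\sigma)=z(i,\sigma')$, $t(i,\sigma_{+j})=t(i+j,\sigma)_{+j}$, $r(i,\sigma_{+j})=r(i+j,\sigma)$, $z(i,\sigma_{+j})=z(i+j,\sigma)-j$. The tape signature consists of an $n$-ary operation $read$, unary operations $write_i$ ($1\le i\le n$), and unary operations $lmove$, $rmove$, interpreted on each $TX$ by $read(p_1,\dots,p_n)(z,\sigma)=p_{\sigma(z)}(z,\sigma)$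 (where $p_{\gamma_i}$ means $p_i$), $write_i(p)(z,\sigma)=p(z,\sigma[z\mapsto\gamma_i])$, $lmove(p)(z,\sigma)=p(z-1,\sigma)$, $rmove(p)(z,\sigma)=p(z+1,\sigma)$, where $\sigma[z\mapsto\gamma]$ agrees with $\sigma$ except that it maps $z$ to $\gamma$. The tape theory over $\Gamma$ is the set of all equations $p=q$ between terms of the tape signature that are valid under this interpretation in $TX$ for every set $X$. *)

theory Defs
  imports Main
begin

text \<open>The tape symbols form a finite type 'g (Gamma).  The n-ary operation read
  takes one argument per tape symbol (indexed by 'g); write is indexed by the
  symbol written.  Variables have type 'v.\<close>

datatype ('g, 'v) tterm =
    Var 'v
  | Read "'g \<Rightarrow> ('g, 'v) tterm"
  | Write 'g "('g, 'v) tterm"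
  | LMove "('g, 'v) tterm"
  | RMove "('g, 'v) tterm"

primrec tsubst :: "('v \<Rightarrow> ('g, 'w) tterm) \<Rightarrow> ('g, 'v) tterm \<Rightarrow> ('g, 'w) tterm" where
  "tsubst s (Var v) = s v"
| "tsubst s (Read ps) = Read (\<lambda>g. tsubst s (ps g))"
| "tsubst s (Write g p) = Write g (tsubst s p)"
| "tsubst s (LMove p) = LMove (tsubst s p)"
| "tsubst s (RMove p) = RMove (tsubst s p)"

inductive eq_derivable :: "(('g, 'v) tterm \<times> ('g, 'v) tterm) set
    \<Rightarrow> ('g, 'v) tterm \<Rightarrow> ('g, 'v) tterm \<Rightarrow> bool"
  for E where
  ax: "(p, q) \<in> E \<Longrightarrow> eq_derivable E (tsubst s p) (tsubst s q)"
| refl: "eq_derivable E p p"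
| sym: "eq_derivable E p q \<Longrightarrow> eq_derivable E q p"
| trans: "eq_derivable E p q \<Longrightarrow> eq_derivable E q r \<Longrightarrow> eq_derivable E p r"
| cong_read: "(\<And>g. eq_derivable E (ps g) (qs g)) \<Longrightarrow> eq_derivable E (Read ps) (Read qs)"
| cong_write: "eq_derivable E p q \<Longrightarrow> eq_derivable E (Write g p) (Write g q)"
| cong_lmove: "eq_derivable E p q \<Longrightarrow> eq_derivable E (LMove p) (LMove q)"
| cong_rmove: "eq_derivable E p q \<Longrightarrow> eq_derivable E (RMove p) (RMove q)"

type_synonym ('g, 'x) tape_map = "int \<Rightarrow> (int \<Rightarrow> 'g) \<Rightarrow> 'x \<times> int \<times> (int \<Rightarrow> 'g)"

definition eq_near :: "int \<Rightarrow> nat \<Rightarrow> (int \<Rightarrow> 'g) \<Rightarrow> (int \<Rightarrow> 'g) \<Rightarrow> bool" where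
  "eq_near i k \<sigma> \<sigma>' \<longleftrightarrow> (\<forall>j. \<bar>i - j\<bar> \<le> int k \<longrightarrow> \<sigma> j = \<sigma>' j)"

definition eq_far :: "int \<Rightarrow> nat \<Rightarrow> (int \<Rightarrow> 'g) \<Rightarrow> (int \<Rightarrow> 'g) \<Rightarrow> bool" where
  "eq_far i k \<sigma> \<sigma>' \<longleftrightarrow> (\<forall>j. \<bar>i - j\<bar> > int k \<longrightarrow> \<sigma> j = \<sigma>' j)"

definition tshift :: "(int \<Rightarrow> 'g) \<Rightarrow> int \<Rightarrow> (int \<Rightarrow> 'g)" where
  "tshift \<sigma> j = \<sigma> \<circ> (\<lambda>i. i + j)"

definition in_T :: "'x set \<Rightarrow> ('g, 'x) tape_map \<Rightarrow> bool" where
  "in_T X f \<longleftrightarrow>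
     (\<forall>i \<sigma>. fst (f i \<sigma>) \<in> X) \<and>
     (\<exists>k::nat. \<forall>i j \<sigma> \<sigma>'. eq_near i k \<sigma> \<sigma>' \<longrightarrow>
        (let r = (\<lambda>i \<sigma>. fst (f i \<sigma>));
             z = (\<lambda>i \<sigma>. fst (snd (f i \<sigma>)));
             t = (\<lambda>i \<sigma>. snd (snd (f i \<sigma>)))
         in eq_near i k (t i \<sigma>) (t i \<sigma>') \<and>
            r i \<sigma> = r i \<sigma>' \<and>
            \<bar>z i \<sigma> - i\<bar> \<le> int k \<and>
            eq_far i k (t i \<sigma>) \<sigma> \<and>
            z i \<sigma> = z i \<sigma>' \<and>
            t i (tshift \<sigma> j) = tshift (t (i + j) \<sigma>) j \<and>
            r i (tshift \<sigma> j) = r (i + j) \<sigma> \<and>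
            z i (tshift \<sigma> j) = z (i + j) \<sigma> - j))"

primrec teval :: "('v \<Rightarrow> ('g, 'x) tape_map) \<Rightarrow> ('g, 'v) tterm \<Rightarrow> ('g, 'x) tape_map" where
  "teval \<rho> (Var v) = \<rho> v"
| "teval \<rho> (Read ps) = (\<lambda>z \<sigma>. teval \<rho> (ps (\<sigma> z)) z \<sigma>)"
| "teval \<rho> (Write g p) = (\<lambda>z \<sigma>. teval \<rho> p z (\<sigma>(z := g)))"
| "teval \<rho> (LMove p) = (\<lambda>z \<sigma>. teval \<rho> p (z - 1) \<sigma>)"
| "teval \<rho> (RMove p) = (\<lambda>z \<sigma>. teval \<rho> p (z + 1) \<sigma>)"

definition tape_valid_in :: "'x set \<Rightarrow> ('g, 'v) tterm \<Rightarrow> ('g, 'v) tterm \<Rightarrow> bool" where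
  "tape_valid_in X p q \<longleftrightarrow>
     (\<forall>\<rho>. (\<forall>v. in_T X (\<rho> v)) \<longrightarrow> teval \<rho> p = teval \<rho> q)"

text \<open>The tape theory: equations valid in T X for every set X.  Sets X range over
  subsets of nat (this yields the same theory as all sets).\<close>

definition tape_theory :: "(('g, 'v) tterm \<times> ('g, 'v) tterm) set" where
  "tape_theory = {(p, q). \<forall>X :: nat set. tape_valid_in X p q}"

end

theory Submission
  imports Defs
begin

primrec md :: "('g::finite, 'v) tterm \<Rightarrow> nat" where
  "md (Var v) = 0"
| "md (Read ps) = Max (range (\<lambda>g. md (ps g)))"
| "md (Write g p) = md p"
| "md (LMove p) = Suc (md p)"
| "md (RMove p) = Suc (md p)"

lemma md_read: "md (ps g) \<le> md (Read ps)"
  by (simp add: Max_ge)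

primrec path :: "('g, 'v) tterm \<Rightarrow> int \<Rightarrow> (int \<Rightarrow> 'g) \<Rightarrow> 'v \<times> int \<times> (int \<Rightarrow> 'g)" where
  "path (Var v) z \<sigma> = (v, z, \<sigma>)"
| "path (Read ps) z \<sigma> = path (ps (\<sigma> z)) z \<sigma>"
| "path (Write g p) z \<sigma> = path p z (\<sigma>(z := g))"
| "path (LMove p) z \<sigma> = path p (z - 1) \<sigma>"
| "path (RMove p) z \<sigma> = path p (z + 1) \<sigma>"

definition cw :: "int \<Rightarrow> int \<Rightarrow> 'g \<Rightarrow> (int \<Rightarrow> 'g) \<Rightarrow> (int \<Rightarrow> 'g)" where
  "cw m z g \<tau> = (\<lambda>j. if j mod m = z mod m then g else \<tau> j)"

primrec cpath :: "int \<Rightarrow> ('g, 'v) tterm \<Rightarrow> int \<Rightarrow> (int \<Rightarrow> 'g) \<Rightarrow> 'v \<times> int \<times> (int \<Rightarrow> 'g)" where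
  "cpath m (Var v) z \<sigma> = (v, z, \<sigma>)"
| "cpath m (Read ps) z \<sigma> = cpath m (ps (\<sigma> z)) z \<sigma>"
| "cpath m (Write g p) z \<sigma> = cpath m p z (cw m z g \<sigma>)"
| "cpath m (LMove p) z \<sigma> = cpath m p (z - 1) \<sigma>"
| "cpath m (RMove p) z \<sigma> = cpath m p (z + 1) \<sigma>"

definition per :: "int \<Rightarrow> (int \<Rightarrow> 'g) \<Rightarrow> bool" where
  "per m \<tau> \<longleftrightarrow> (\<forall>j. \<tau> (j mod m) = \<tau> j)"

lemma teval_path: "teval \<rho> p z \<sigma> = (case path p z \<sigma> of (v, z', \<sigma>') \<Rightarrow> \<rho> v z' \<sigma>')"
  by (induction p arbitrary: z \<sigma>) auto

lemma cpath_tsubst: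
  "cpath m (tsubst s p) z \<tau> = (case cpath m p z \<tau> of (v, z', \<tau>') \<Rightarrow> cpath m (s v) z' \<tau>')"
  by (induction p arbitrary: z \<tau>) auto

lemma tsubst_Var: "tsubst Var p = p"
  by (induction p) auto

lemma cpath_per: "per m \<tau> \<Longrightarrow> per m (snd (snd (cpath m p z \<tau>)))"
proof (induction p arbitrary: z \<tau>)
  case (Write g p)
  have "per m (cw m z g \<tau>)" using Write.prems by (simp add: per_def cw_def)
  then show ?case using Write.IH by simp
qed auto

lemma mod_diff_neq: "0 < (j::int) - w \<Longrightarrow> j - w < m \<Longrightarrow> w mod m \<noteq> j mod m"
proof
  assume a: "0 < j - w" "j - w < m" "w mod m = j mod m"
  then have "m dvd (j - w)" by (metis mod_eq_dvd_iff)
  then have "m \<le> j - w" using a(1) by (simp add: zdvd_imp_le)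
  then show False using a(2) by simp
qed

lemma mod_eq_close: "\<bar>(j::int) - w\<bar> < m \<Longrightarrow> j mod m = w mod m \<Longrightarrow> j = w"
  using mod_diff_neq[of w j m] mod_diff_neq[of j w m]
  by (cases "j < w"; cases "w < j") auto

lemma path_local:
  "md p \<le> d \<Longrightarrow> \<not> (z - int d \<le> j \<and> j \<le> z + int d) \<Longrightarrow> snd (snd (path p z \<sigma>)) j = \<sigma> j"
proof (induction p arbitrary: z \<sigma> d)
  case (Read ps)
  show ?case using Read.IH[OF rangeI, of "\<sigma> z" d z \<sigma>] Read.prems md_read[of ps "\<sigma> z"] by auto
next
  case (Write g p)
  then show ?case by auto
next
  case (LMove p)
  then obtain d' where "d = Suc d'" "md p \<le> d'" by (cases d) auto
  then show ?case using LMove.IH[of d' "z - 1" \<sigma>] LMove.prems by auto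
next
  case (RMove p)
  then obtain d' where "d = Suc d'" "md p \<le> d'" by (cases d) auto
  then show ?case using RMove.IH[of d' "z + 1" \<sigma>] RMove.prems by auto
qed auto

lemma cpath_local:
  "0 < m \<Longrightarrow> md p \<le> d \<Longrightarrow> (\<forall>w. z - int d \<le> w \<and> w \<le> z + int d \<longrightarrow> w mod m \<noteq> j mod m)
   \<Longrightarrow> snd (snd (cpath m p z \<tau>)) j = \<tau> j"
proof (induction p arbitrary: z \<tau> d)
  case (Read ps)
  show ?case using Read.IH[OF rangeI, of "\<tau> z" d z \<tau>] Read.prems md_read[of ps "\<tau> z"] by auto
next
  case (Write g p)
  have "cw m z g \<tau> j = \<tau> j" using Write.prems(3)[rule_format, of z] by (auto simp: cw_def)
  then show ?case using Write by auto
next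
  case (LMove p)
  then obtain d' where "d = Suc d'" "md p \<le> d'" by (cases d) auto
  then show ?case using LMove.IH[of d' "z - 1" \<tau>] LMove.prems by auto
next
  case (RMove p)
  then obtain d' where "d = Suc d'" "md p \<le> d'" by (cases d) auto
  then show ?case using RMove.IH[of d' "z + 1" \<tau>] RMove.prems by auto
qed auto


lemma corr:
  "2 * int d < m \<Longrightarrow> md p \<le> d \<Longrightarrow> (\<forall>j. z - int d \<le> j \<and> j \<le> z + int d \<longrightarrow> \<sigma> j = \<tau> j) \<Longrightarrow>
   fst (cpath m p z \<tau>) = fst (path p z \<sigma>) \<and> fst (snd (cpath m p z \<tau>)) = fst (snd (path p z \<sigma>)) \<and>
   (\<forall>j. z - int d \<le> j \<and> j \<le> z + int d \<longrightarrow> snd (snd (cpath m p z \<tau>)) j = snd (snd (path p z \<sigma>)) j)"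
proof (induction p arbitrary: z \<sigma> \<tau> d)
  case (Read ps)
  have "\<sigma> z = \<tau> z" using Read.prems(3) by auto
  moreover have "md (ps (\<sigma> z)) \<le> d" using Read.prems(2) md_read[of ps "\<sigma> z"] by auto
  ultimately show ?case using Read.IH[OF rangeI] Read.prems by auto
next
  case (Write g p)
  have "\<forall>j. z - int d \<le> j \<and> j \<le> z + int d \<longrightarrow> (\<sigma>(z := g)) j = cw m z g \<tau> j"
  proof (intro allI impI)
    fix j assume j: "z - int d \<le> j \<and> j \<le> z + int d"
    show "(\<sigma>(z := g)) j = cw m z g \<tau> j"
    proof (cases "j mod m = z mod m")
      case True
      then have "j = z" using mod_eq_close[of j z m] j Write.prems(1) by auto
      then show ?thesis by (simp add: cw_def)
    next
      case False
      then have "j \<noteq> z" by auto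
      then show ?thesis using False j Write.prems(3) by (simp add: cw_def)
    qed
  qed
  then have "fst (cpath m p z (cw m z g \<tau>)) = fst (path p z (\<sigma>(z := g))) \<and> fst (snd (cpath m p z (cw m z g \<tau>))) = fst (snd (path p z (\<sigma>(z := g)))) \<and>
   (\<forall>j. z - int d \<le> j \<and> j \<le> z + int d \<longrightarrow> snd (snd (cpath m p z (cw m z g \<tau>))) j = snd (snd (path p z (\<sigma>(z := g)))) j)"
    using Write.IH[of d z "\<sigma>(z := g)" "cw m z g \<tau>"] Write.prems(1) Write.prems(2)[simplified] by blast
  then show ?case unfolding path.simps cpath.simps by assumption
next
  case (LMove p)
  then obtain d' where d: "d = Suc d'" "md p \<le> d'" by (cases d) auto
  have m0: "0 < m" using LMove.prems(1) by simp
  have IH: "fst (cpath m p (z-1) \<tau>) = fst (path p (z-1) \<sigma>) \<and> fst (snd (cpath m p (z-1) \<tau>)) = fst (snd (path p (z-1) \<sigma>)) \<and>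
   (\<forall>j. z - 1 - int d' \<le> j \<and> j \<le> z - 1 + int d' \<longrightarrow> snd (snd (cpath m p (z-1) \<tau>)) j = snd (snd (path p (z-1) \<sigma>)) j)"
    using LMove.IH[of d' "z - 1" \<sigma> \<tau>] LMove.prems d by auto
  have "\<forall>j. z - int d \<le> j \<and> j \<le> z + int d \<longrightarrow> snd (snd (cpath m p (z-1) \<tau>)) j = snd (snd (path p (z-1) \<sigma>)) j"
  proof (intro allI impI)
    fix j assume j: "z - int d \<le> j \<and> j \<le> z + int d"
    show "snd (snd (cpath m p (z-1) \<tau>)) j = snd (snd (path p (z-1) \<sigma>)) j"
    proof (cases "j \<le> z - 1 + int d'")
      case True
      then show ?thesis using IH j d by auto
    next
      case False
      have a: "snd (snd (path p (z-1) \<sigma>)) j = \<sigma> j"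
        using path_local[of p d' "z - 1" j \<sigma>] d False by auto
      have "\<forall>w. z - 1 - int d' \<le> w \<and> w \<le> z - 1 + int d' \<longrightarrow> w mod m \<noteq> j mod m"
        using mod_diff_neq[of j _ m] False j d LMove.prems(1) by auto
      then have b: "snd (snd (cpath m p (z-1) \<tau>)) j = \<tau> j"
        using cpath_local[of m p d' "z - 1" j \<tau>] d m0 by auto
      show ?thesis using a b j LMove.prems(3) by auto
    qed
  qed
  then show ?case using IH by simp
next
  case (RMove p)
  then obtain d' where d: "d = Suc d'" "md p \<le> d'" by (cases d) auto
  have m0: "0 < m" using RMove.prems(1) by simp
  have IH: "fst (cpath m p (z+1) \<tau>) = fst (path p (z+1) \<sigma>) \<and> fst (snd (cpath m p (z+1) \<tau>)) = fst (snd (path p (z+1) \<sigma>)) \<and>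
   (\<forall>j. z + 1 - int d' \<le> j \<and> j \<le> z + 1 + int d' \<longrightarrow> snd (snd (cpath m p (z+1) \<tau>)) j = snd (snd (path p (z+1) \<sigma>)) j)"
    using RMove.IH[of d' "z + 1" \<sigma> \<tau>] RMove.prems d by auto
  have "\<forall>j. z - int d \<le> j \<and> j \<le> z + int d \<longrightarrow> snd (snd (cpath m p (z+1) \<tau>)) j = snd (snd (path p (z+1) \<sigma>)) j"
  proof (intro allI impI)
    fix j assume j: "z - int d \<le> j \<and> j \<le> z + int d"
    show "snd (snd (cpath m p (z+1) \<tau>)) j = snd (snd (path p (z+1) \<sigma>)) j"
    proof (cases "z + 1 - int d' \<le> j")
      case True
      then show ?thesis using IH j d by auto
    next
      case False
      have a: "snd (snd (path p (z+1) \<sigma>)) j = \<sigma> j"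
        using path_local[of p d' "z + 1" j \<sigma>] d False by auto
      have "\<forall>w. z + 1 - int d' \<le> w \<and> w \<le> z + 1 + int d' \<longrightarrow> w mod m \<noteq> j mod m"
      proof (intro allI impI)
        fix w assume w: "z + 1 - int d' \<le> w \<and> w \<le> z + 1 + int d'"
        have "j mod m \<noteq> w mod m" using mod_diff_neq[of w j m] False j d RMove.prems(1) w by auto
        then show "w mod m \<noteq> j mod m" by simp
      qed
      then have b: "snd (snd (cpath m p (z+1) \<tau>)) j = \<tau> j"
        using cpath_local[of m p d' "z + 1" j \<tau>] d m0 by auto
      show ?thesis using a b j RMove.prems(3) by auto
    qed
  qed
  then show ?case using IH by simp
qed auto


lemma valid_circle:
  assumes lin: "\<And>z \<sigma>. path p z \<sigma> = path q z \<sigma>"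
    and dp: "md p \<le> d" and dq: "md q \<le> d" and m: "2 * int d + 1 < m" and pt: "per m \<tau>"
  shows "cpath m p z \<tau> = cpath m q z \<tau>"
proof -
  have m0: "0 < m" using m by simp
  have m2: "2 * int d < m" using m by simp
  note cp = corr[OF m2 dp, of z \<tau> \<tau>] corr[OF m2 dq, of z \<tau> \<tau>]
  define tp where "tp = snd (snd (cpath m p z \<tau>))"
  define tq where "tq = snd (snd (cpath m q z \<tau>))"
  have pp: "per m tp" unfolding tp_def by (rule cpath_per[OF pt])
  have pq: "per m tq" unfolding tq_def by (rule cpath_per[OF pt])
  have "tp = tq"
  proof
    fix j
    define w where "w = z - int d + (j - (z - int d)) mod m"
    have wm: "w mod m = j mod m" unfolding w_def by (simp add: mod_simps)
    have w1: "z - int d \<le> w" "w < z - int d + m" unfolding w_def using m0 by auto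
    have "tp w = tq w"
    proof (cases "w \<le> z + int d")
      case True
      then show ?thesis using cp w1 lin unfolding tp_def tq_def by auto
    next
      case False
      have "\<forall>u. z - int d \<le> u \<and> u \<le> z + int d \<longrightarrow> u mod m \<noteq> w mod m"
        using mod_diff_neq[of w _ m] False w1 by auto
      then show ?thesis unfolding tp_def tq_def
        using cpath_local[OF m0 dp, of z w \<tau>] cpath_local[OF m0 dq, of z w \<tau>] by auto
    qed
    then show "tp j = tq j" using pp pq wm unfolding per_def by metis
  qed
  then show ?thesis using cp lin unfolding tp_def tq_def by (simp add: prod_eq_iff)
qed


lemma sound:
  assumes "eq_derivable E p q"
    and E: "\<And>p q z \<tau>. (p, q) \<in> E \<Longrightarrow> per m \<tau> \<Longrightarrow> cpath m p z \<tau> = cpath m q z \<tau>" 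
  shows "per m \<tau> \<Longrightarrow> cpath m p z \<tau> = cpath m q z \<tau>"
  using assms(1)
proof (induction arbitrary: z \<tau> rule: eq_derivable.induct)
  case (ax p q s)
  have e: "cpath m p z \<tau> = cpath m q z \<tau>" using E[OF ax.hyps ax.prems] .
  have "per m (snd (snd (cpath m p z \<tau>)))" using cpath_per[OF ax.prems] .
  then show ?case using e by (auto simp: cpath_tsubst split: prod.splits)
next
  case (cong_write p q g)
  have "per m (cw m z g \<tau>)" using cong_write.prems by (simp add: per_def cw_def)
  then show ?case using cong_write.IH by simp
qed auto

lemma in_T_gen: "in_T UNIV (\<lambda>i \<sigma>. (v::nat, i, \<sigma>))"
  unfolding in_T_def
  by (rule conjI, simp, rule exI[of _ 0]) (auto simp: eq_near_def eq_far_def Let_def)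

lemma theory_path:
  fixes p q :: "('g::finite, nat) tterm"
  assumes "(p, q) \<in> tape_theory"
  shows "path p z \<sigma> = path q z \<sigma>"
proof -
  let ?\<rho> = "(\<lambda>v i \<sigma>. (v::nat, i, \<sigma>)) :: nat \<Rightarrow> ('g, nat) tape_map"
  have "tape_valid_in (UNIV :: nat set) p q" using assms unfolding tape_theory_def by auto
  moreover have "\<forall>v. in_T (UNIV :: nat set) (?\<rho> v)" using in_T_gen by blast
  ultimately have "teval ?\<rho> p = teval ?\<rho> q" unfolding tape_valid_in_def
    by (rule_tac mp[OF spec[of _ ?\<rho>]])
  then have "teval ?\<rho> p z \<sigma> = teval ?\<rho> q z \<sigma>" by simp
  then show ?thesis by (simp add: teval_path split: prod.splits)
qed

lemma path_theory:
  assumes "\<And>z \<sigma>. path p z \<sigma> = path q z \<sigma>"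
  shows "(p, q) \<in> tape_theory"
  unfolding tape_theory_def tape_valid_in_def
  using assms by (auto intro!: ext simp: teval_path)

lemma path_R: "path ((RMove ^^ n) p) z \<sigma> = path p (z + int n) \<sigma>"
  by (induction n arbitrary: z) (auto simp: add.assoc)
lemma path_L: "path ((LMove ^^ n) p) z \<sigma> = path p (z - int n) \<sigma>"
  by (induction n arbitrary: z) (auto simp: algebra_simps)
lemma cpath_R: "cpath m ((RMove ^^ n) p) z \<sigma> = cpath m p (z + int n) \<sigma>"
  by (induction n arbitrary: z) (auto simp: add.assoc)
lemma cpath_L: "cpath m ((LMove ^^ n) p) z \<sigma> = cpath m p (z - int n) \<sigma>"
  by (induction n arbitrary: z) (auto simp: algebra_simps)


lemma two_elems: "card (UNIV :: 'g::finite set) \<ge> 2 \<Longrightarrow> \<exists>a b :: 'g. a \<noteq> b"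
  by (metis One_nat_def card_le_Suc0_iff_eq finite_UNIV not_less_eq_eq numeral_2_eq_2)

theorem mainTheorem2:
  assumes "card (UNIV :: 'g::finite set) \<ge> 2"
  shows "\<not> (\<exists>E :: (('g, nat) tterm \<times> ('g, nat) tterm) set.
             finite E \<and> {(p, q). eq_derivable E p q} = tape_theory)"
proof
  assume "\<exists>E :: (('g, nat) tterm \<times> ('g, nat) tterm) set.
             finite E \<and> {(p, q). eq_derivable E p q} = tape_theory"
  then obtain E :: "(('g, nat) tterm \<times> ('g, nat) tterm) set" where
    fE: "finite E" and EE: "{(p, q). eq_derivable E p q} = tape_theory" by blast
  obtain a b :: 'g where ab: "a \<noteq> b" using two_elems[OF assms] by blast
  define D where "D = Max (insert 0 ((\<lambda>(p, q). max (md p) (md q)) ` E))"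
  define n where "n = 2 * D + 2"
  define m where "m = int n"
  have m2: "2 * int D + 1 < m" unfolding m_def n_def by simp
  have Epath: "\<And>p q z \<sigma>. (p, q) \<in> E \<Longrightarrow> path p z \<sigma> = path q z \<sigma>"
  proof -
    fix p q z \<sigma> assume pq: "(p, q) \<in> E"
    have "eq_derivable E (tsubst Var p) (tsubst Var q)" by (rule eq_derivable.ax[OF pq])
    then have "(p, q) \<in> tape_theory" using EE by (simp add: tsubst_Var) blast
    then show "path p z \<sigma> = path q z \<sigma>" by (rule theory_path)
  qed
  have Emd: "\<And>p q. (p, q) \<in> E \<Longrightarrow> md p \<le> D \<and> md q \<le> D"
  proof -
    fix p q assume pq: "(p, q) \<in> E"
    have "max (md p) (md q) \<le> D" unfolding D_def
      using fE pq by (intro Max_ge) force+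
    then show "md p \<le> D \<and> md q \<le> D" by simp
  qed
  have Ec: "\<And>p q z \<tau>. (p, q) \<in> E \<Longrightarrow> per m \<tau> \<Longrightarrow> cpath m p z \<tau> = cpath m q z \<tau>"
    using valid_circle Epath Emd m2 by blast
  define p0 :: "('g, nat) tterm" where "p0 = Write a ((RMove ^^ n) (Write b ((LMove ^^ n) (Var 0))))"
  define q0 :: "('g, nat) tterm" where "q0 = (RMove ^^ n) (Write b ((LMove ^^ n) (Write a (Var 0))))"
  have "\<And>z \<sigma>. path p0 z \<sigma> = path q0 z \<sigma>"
  proof -
    fix z :: int and \<sigma> :: "int \<Rightarrow> 'g"
    have "z \<noteq> z + int n" unfolding n_def by simp
    then show "path p0 z \<sigma> = path q0 z \<sigma>" unfolding p0_def q0_def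
      by (simp add: path_R path_L fun_upd_twist)
  qed
  then have "(p0, q0) \<in> tape_theory" by (rule path_theory)
  then have der: "eq_derivable E p0 q0" using EE by blast
  have per0: "per m (\<lambda>_. a)" by (simp add: per_def)
  have "cpath m p0 0 (\<lambda>_. a) = cpath m q0 0 (\<lambda>_. a)"
    using sound[OF der Ec per0] by blast
  moreover have "snd (snd (cpath m p0 0 (\<lambda>_. a))) 0 = b"
    unfolding p0_def by (simp add: cpath_R cpath_L cw_def m_def)
  moreover have "snd (snd (cpath m q0 0 (\<lambda>_. a))) 0 = a"
    unfolding q0_def by (simp add: cpath_R cpath_L cw_def m_def)
  ultimately show False using ab by simp
qed

end
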